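(* Let $h:\mathbb{R}\to[0,+\infty)$ be a super-multiplicative function (i.e. $h(xy)\ge h(x)h(y)$ for all $x,y\in\mathbb{R}$) such that $h(t)\ge t$ for all $t$ and $h(1)=1$. Let $f:(a,b)\to\mathbb{R}$ be $h$-mid-convex, i.e. $$f\Big(\frac{x+y}{2}\Big)\le h\Big(\frac12\Big)\big(f(x)+f(y)\big)\quad\text{for all } x,y\in(a,b).$$ Suppose there is a set $M\subseteq(a,b)$ of positive Lebesgue measure such that $f$ is bounded above on $M$. Then $f$ is continuous. *)

theory Defs
  imports "HOL-Analysis.Analysis"
begin

definition super_multiplicative :: "(real \<Rightarrow> real) \<Rightarrow> bool" where
  "super_multiplicative h \<longleftrightarrow> (\<forall>x y. h (x * y) \<ge> h x * h y)"

definition h_mid_convex :: "(real \<Rightarrow> real) \<Rightarrow> real set \<Rightarrow> (real \<Rightarrow> real) \<Rightarrow> bool" where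
  "h_mid_convex h I f \<longleftrightarrow>
     (\<forall>x\<in>I. \<forall>y\<in>I. f ((x + y) / 2) \<le> h (1/2) * (f x + f y))"

end

theory Submission
  imports Defs
begin


lemma reflect_meas: "(\<lambda>x::real. s - x) \<in> lebesgue \<rightarrow>\<^sub>M lebesgue"
  using lebesgue_affine_measurable[of "\<lambda>_. -1" s] by simp
lemma reflect_emeas: "emeasure lebesgue ((\<lambda>x::real. s - x) ` A) = emeasure lebesgue A"
  using emeasure_lebesgue_affine[of "-1" s A] by simp

lemma emeasure_ball_real: "r > 0 \<Longrightarrow> emeasure lebesgue (ball (c::real) r) = ennreal (2*r)"
  by (simp add: ball_eq_greaterThanLessThan)

lemma steinhaus_step:
  fixes A :: "real set"
  assumes A: "A \<in> sets lebesgue" and r: "r > 0"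
    and big: "emeasure lebesgue (A \<inter> ball c r) > ennreal (3/2 * r)"
    and z: "dist z c < r/4"
  shows "\<exists>x\<in>A. \<exists>y\<in>A. z = (x + y)/2"
proof (rule ccontr)
  assume nz: "\<not> ?thesis"
  define s where "s = 2 * z"
  define A' where "A' = A \<inter> ball c r"
  define R where "R = (\<lambda>x. s - x) ` A'"
  have A'set: "A' \<in> sets lebesgue" unfolding A'_def using A
    by (simp add: borel_open sets_completionI_sets sets.Int)
  have Req: "R = (\<lambda>x. s - x) -` A'"
    unfolding R_def by (force simp: image_iff)
  have Rset: "R \<in> sets lebesgue"
    using measurable_sets[OF reflect_meas A'set, of s] Req by simp
  have disj: "A' \<inter> R = {}"
  proof (rule ccontr)
    assume "A' \<inter> R \<noteq> {}"
    then obtain y x where "y \<in> A'" "x \<in> A'" "y = s - x" unfolding R_def by blast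
    then have "z = (x + y)/2" "x \<in> A" "y \<in> A" unfolding s_def A'_def by auto
    with nz show False by blast
  qed
  have sub: "A' \<union> R \<subseteq> ball c (3/2*r)"
  proof -
    have "A' \<subseteq> ball c (3/2*r)" unfolding A'_def using r by auto
    moreover have "R \<subseteq> ball c (3/2*r)"
    proof
      fix y assume "y \<in> R"
      then obtain x where x: "x \<in> ball c r" "y = s - x" unfolding R_def A'_def by blast
      then show "y \<in> ball c (3/2*r)" using z unfolding s_def dist_real_def by (simp add: abs_less_iff) (smt (verit) x(1) mem_ball dist_real_def)
    qed
    ultimately show ?thesis by blast
  qed
  have "emeasure lebesgue A' + emeasure lebesgue R = emeasure lebesgue (A' \<union> R)"
    by (rule plus_emeasure[OF A'set Rset disj])
  also have "\<dots> \<le> emeasure lebesgue (ball c (3/2*r))"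
    by (intro emeasure_mono sub) (simp add: borel_open sets_completionI_sets)
  also have "\<dots> = ennreal (3 * r)" using r emeasure_ball_real[of "3/2*r" c] by simp
  finally have le: "emeasure lebesgue A' + emeasure lebesgue R \<le> ennreal (3*r)" .
  have "emeasure lebesgue A' \<le> emeasure lebesgue (ball c r)"
    unfolding A'_def by (intro emeasure_mono) (auto simp: borel_open sets_completionI_sets)
  also have "\<dots> < \<infinity>" using r emeasure_ball_real[of r c] by simp
  finally have "A' \<in> lmeasurable" using A'set by (intro fmeasurableI)
  then have eA: "emeasure lebesgue A' = ennreal (measure lebesgue A')"
    by (simp add: emeasure_eq_measure2)
  have "emeasure lebesgue R = emeasure lebesgue A'" unfolding R_def by (rule reflect_emeas)
  then have "ennreal (2 * measure lebesgue A') \<le> ennreal (3*r)"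
    using le eA by (simp add: ennreal_plus[symmetric] del: ennreal_plus)
  then have m1: "2 * measure lebesgue A' \<le> 3*r" using r by (simp add: ennreal_le_iff)
  have "ennreal (3/2*r) < ennreal (measure lebesgue A')" using big eA unfolding A'_def by simp
  then have "3/2*r < measure lebesgue A'" using r by (subst (asm) ennreal_less_iff) auto
  then show False using m1 by simp
qed



lemma density_34:
  fixes A :: "real set"
  assumes A: "A \<in> lmeasurable" and pos: "measure lebesgue A > 0"
  shows "\<exists>c r. r > 0 \<and> measure lebesgue (A \<inter> ball c r) > 3/2 * r"
proof (rule ccontr)
  assume "\<not> ?thesis"
  then have H: "\<And>c r. r > 0 \<Longrightarrow> measure lebesgue (A \<inter> ball c r) \<le> 3/2 * r"
    by (meson not_less)
  define m where "m = measure lebesgue A"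
  have Aset: "A \<in> sets lebesgue" using A by (simp add: fmeasurable_def)
  have "m/4 > 0" using pos m_def by simp
  then obtain T where T: "open T" "A \<subseteq> T" "(T - A) \<in> lmeasurable"
      "emeasure lebesgue (T - A) < ennreal (m/4)"
    using sets_lebesgue_outer_open[OF Aset] by metis
  have Tset: "T \<in> sets lebesgue" using T(1) by (simp add: borel_open sets_completionI_sets)
  have TA: "T = A \<union> (T - A)" using T(2) by auto
  have emT: "emeasure lebesgue T = emeasure lebesgue A + emeasure lebesgue (T - A)"
    by (subst TA, rule plus_emeasure[symmetric]) (use Aset T(3) in \<open>auto simp: fmeasurable_def\<close>)
  have emA: "emeasure lebesgue A = ennreal m"
    using A m_def by (simp add: emeasure_eq_measure2)
  have emT2: "emeasure lebesgue T \<le> ennreal (m + m/4)"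
  proof -
    have "emeasure lebesgue T \<le> ennreal m + ennreal (m/4)"
      using emT emA T(4) by (metis add_left_mono less_imp_le)
    also have "\<dots> = ennreal (m + m/4)" using pos m_def by (intro ennreal_plus[symmetric]) auto
    finally show ?thesis .
  qed
  define K where "K = {i::real\<times>real. snd i > 0 \<and> ball (fst i) (snd i) \<subseteq> T}"
  have cov: "\<exists>i. i \<in> K \<and> x \<in> ball (fst i) (snd i) \<and> snd i < d" if xA: "x \<in> A" and d0: "d > 0" for x d
  proof -
    have "x \<in> T" using xA T(2) by blast
    then obtain e where e: "e > 0" "ball x e \<subseteq> T" using T(1) open_contains_ball by blast
    define r where "r = min e d / 2"
    have r0: "r > 0" unfolding r_def using e(1) d0 by simp
    have re: "r \<le> e" unfolding r_def using e(1) d0 by simp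
    have rd: "r < d" unfolding r_def using e(1) d0 by simp
    have "ball x r \<subseteq> T" using e(2) re by (meson order_trans subset_ball)
    then have "(x, r) \<in> K" unfolding K_def using r0 by simp
    moreover have "x \<in> ball (fst (x, r)) (snd (x, r))" using r0 by simp
    ultimately show ?thesis using rd by force
  qed
  obtain C where C: "countable C" "C \<subseteq> K"
    and pw: "pairwise (\<lambda>i j. disjnt (ball (fst i) (snd i)) (ball (fst j) (snd j))) C"
    and neg: "negligible (A - (\<Union>i\<in>C. ball (fst i) (snd i)))"
    by (rule Vitali_covering_theorem_balls[of A K fst snd, OF cov])
  define B where "B = (\<lambda>i::real\<times>real. ball (fst i) (snd i))"
  have disjB: "disjoint_family_on B C"
  proof (unfold disjoint_family_on_def, intro ballI impI)
    fix m n assume mn: "m \<in> C" "n \<in> C" "m \<noteq> n"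
    show "B m \<inter> B n = {}" using pairwiseD[OF pw mn] unfolding B_def disjnt_def .
  qed
  have disjAB: "disjoint_family_on (\<lambda>i. A \<inter> B i) C"
    using disjB unfolding disjoint_family_on_def by blast
  have Bset: "B i \<in> sets lebesgue" for i unfolding B_def by (simp add: borel_open sets_completionI_sets)
  have ABset: "A \<inter> B i \<in> sets lebesgue" for i using Aset Bset by blast
  have "emeasure lebesgue (A \<inter> (\<Union>(B ` C))) = emeasure lebesgue (\<Union>i\<in>C. A \<inter> B i)"
    by (simp only: Int_UN_distrib)
  also have "\<dots> = (\<integral>\<^sup>+i. emeasure lebesgue (A \<inter> B i) \<partial>count_space C)"
    by (rule emeasure_UN_countable[OF ABset C(1) disjAB])
  also have "\<dots> \<le> (\<integral>\<^sup>+i. ennreal (3/4) * emeasure lebesgue (B i) \<partial>count_space C)"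
  proof (rule nn_integral_mono)
    fix i assume "i \<in> space (count_space C)"
    then have i: "snd i > 0" using C(2) by (auto simp: K_def)
    have "A \<inter> B i \<in> lmeasurable" by (rule fmeasurableI2[OF A Int_lower1 ABset])
    then have "emeasure lebesgue (A \<inter> B i) = ennreal (measure lebesgue (A \<inter> B i))"
      by (simp add: emeasure_eq_measure2)
    also have "\<dots> \<le> ennreal (3/2 * snd i)" using H[OF i, of "fst i"] unfolding B_def by (rule ennreal_leI)
    also have "\<dots> = ennreal (3/4) * emeasure lebesgue (B i)"
    proof -
      have "ennreal (3/4) * ennreal (2 * snd i) = ennreal (3/4 * (2 * snd i))"
        using i by (intro ennreal_mult[symmetric]) auto
      then show ?thesis using emeasure_ball_real[OF i, of "fst i"] unfolding B_def by simp
    qed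
    finally show "emeasure lebesgue (A \<inter> B i) \<le> ennreal (3/4) * emeasure lebesgue (B i)" .
  qed
  also have "\<dots> = ennreal (3/4) * (\<integral>\<^sup>+i. emeasure lebesgue (B i) \<partial>count_space C)"
    by (rule nn_integral_cmult) simp
  also have "\<dots> = ennreal (3/4) * emeasure lebesgue (\<Union>(B ` C))"
    by (subst emeasure_UN_countable[OF Bset C(1) disjB]) simp
  also have "\<dots> \<le> ennreal (3/4) * emeasure lebesgue T"
  proof -
    have "\<Union>(B ` C) \<subseteq> T" using C(2) by (auto simp: K_def B_def)
    then show ?thesis by (intro mult_left_mono emeasure_mono Tset) auto
  qed
  also have "\<dots> \<le> ennreal (3/4) * ennreal (m + m/4)"
    by (intro mult_left_mono emT2) auto
  also have "\<dots> = ennreal (15/16 * m)"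
    using pos m_def by (subst ennreal_mult[symmetric]) auto
  finally have L: "emeasure lebesgue (A \<inter> (\<Union>(B ` C))) \<le> ennreal (15/16 * m)" .
  have Nset: "A - \<Union>(B ` C) \<in> sets lebesgue"
    using Aset by (intro sets.Diff sets.countable_UN'' ) (auto simp: Bset C(1))
  have N0: "emeasure lebesgue (A - \<Union>(B ` C)) = 0"
    using neg Nset negligible_iff_emeasure0 unfolding B_def by blast
  have "emeasure lebesgue A \<le> emeasure lebesgue (A \<inter> (\<Union>(B ` C))) + emeasure lebesgue (A - \<Union>(B ` C))"
  proof -
    have Uset: "A \<inter> \<Union>(B ` C) \<in> sets lebesgue"
      using Aset by (intro sets.Int sets.countable_UN'') (auto simp: Bset C(1))
    have "A = (A \<inter> \<Union>(B ` C)) \<union> (A - \<Union>(B ` C))" by blast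
    then show ?thesis using emeasure_subadditive[OF Uset Nset] by simp
  qed
  then have "ennreal m \<le> ennreal (15/16 * m)" using L N0 emA by simp
  moreover have "0 \<le> 15/16 * m" using pos m_def by simp
  ultimately have "m \<le> 15/16 * m" using ennreal_le_iff by blast
  then show False using pos m_def by simp
qed

definition mconv :: "(real \<Rightarrow> real) \<Rightarrow> real \<Rightarrow> real \<Rightarrow> bool" where
  "mconv f a b \<longleftrightarrow> (\<forall>x\<in>{a<..<b}. \<forall>y\<in>{a<..<b}. f ((x+y)/2) \<le> (f x + f y)/2)"

lemma comb_in:
  fixes t :: real
  assumes "x \<in> {a<..<b}" "u \<in> {a<..<b}" "0 \<le> t" "t \<le> 1"
  shows "x + t*(u-x) \<in> {a<..<b}"
proof -
  have "x + t*(u-x) = (1-t)*x + t*u" by (simp add: algebra_simps)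
  moreover have "(1-t)*x + t*u > a"
  proof -
    have "(1-t)*x + t*u > (1-t)*a + t*a \<or> (t = 0 \<and> (1-t)*x + t*u > a) \<or> (t = 1 \<and> (1-t)*x + t*u > a)"
      using assms by (cases "t = 0"; cases "t = 1") (auto intro!: add_less_le_mono add_le_less_mono mult_strict_left_mono mult_left_mono)
    then show ?thesis by (auto simp: algebra_simps)
  qed
  moreover have "(1-t)*x + t*u < b"
  proof -
    have "(1-t)*x + t*u < (1-t)*b + t*b \<or> (t = 0 \<and> (1-t)*x + t*u < b) \<or> (t = 1 \<and> (1-t)*x + t*u < b)"
      using assms by (cases "t = 0"; cases "t = 1") (auto intro!: add_less_le_mono add_le_less_mono mult_strict_left_mono mult_left_mono)
    then show ?thesis by (auto simp: algebra_simps)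
  qed
  ultimately show ?thesis by simp
qed

lemma mc_iter:
  assumes mid: "mconv f a b" and x: "x \<in> {a<..<b}" and u: "u \<in> {a<..<b}"
  shows "f (x + (1/2)^n*(u-x)) \<le> (1/2)^n * f u + (1-(1/2)^n) * f x"
proof (induction n)
  case 0
  then show ?case by simp
next
  case (Suc n)
  define q where "q = x + (1/2)^n*(u-x)"
  have q: "q \<in> {a<..<b}" unfolding q_def
    by (rule comb_in[OF x u]) (auto simp: power_le_one)
  have eq: "x + (1/2)^Suc n*(u-x) = (x + q)/2" unfolding q_def by (simp add: field_simps)
  have "f ((x + q)/2) \<le> (f x + f q)/2" using mid x q unfolding mconv_def by blast
  also have "\<dots> \<le> (f x + ((1/2)^n * f u + (1-(1/2)^n) * f x))/2"
    using Suc.IH unfolding q_def by simp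
  also have "\<dots> = (1/2)^Suc n * f u + (1-(1/2)^Suc n) * f x"
    by (simp add: field_simps)
  finally show ?case unfolding eq .
qed

lemma mc_cont_at:
  assumes mid: "mconv f a b" and x0: "x0 \<in> {a<..<b}" and d: "d > 0"
    and sub: "ball x0 d \<subseteq> {a<..<b}" and bd: "\<And>y. y \<in> ball x0 d \<Longrightarrow> f y \<le> K"
  shows "isCont f x0"
proof -
  define D where "D = K - f x0"
  have D: "D \<ge> 0" using bd[of x0] d unfolding D_def by simp
  have key: "\<bar>f y - f x0\<bar> \<le> (1/2)^n * D" if y: "\<bar>y - x0\<bar> < (1/2)^n * d" for y n
  proof -
    define t :: real where "t = (1/2)^n"
    have t: "t > 0" "t \<le> 1" unfolding t_def by (auto simp: power_le_one)
    define u where "u = x0 + (y - x0)/t"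
    define u' where "u' = x0 - (y - x0)/t"
    have yt: "\<bar>y - x0\<bar> < d * t" using y unfolding t_def by (simp add: mult.commute)
    have "\<bar>(y - x0)/t\<bar> = \<bar>y - x0\<bar>/t" using t by (simp add: abs_divide)
    also have "\<dots> < d" using yt t by (subst pos_divide_less_eq) auto
    finally have "\<bar>(y - x0)/t\<bar> < d" .
    then have uin: "u \<in> ball x0 d" "u' \<in> ball x0 d" unfolding u_def u'_def by (auto simp: dist_real_def)
    have yeq: "y = x0 + t*(u - x0)" unfolding u_def using t by simp
    have y'eq: "2*x0 - y = x0 + t*(u' - x0)" unfolding u'_def using t by simp
    have f1: "f y \<le> t * K + (1-t) * f x0"
      using mc_iter[OF mid x0, of u n] uin sub bd[of u] t unfolding t_def[symmetric] yeq[symmetric]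
      by (smt (verit, ccfv_SIG) mult_left_mono subsetD)
    have f2: "f (2*x0 - y) \<le> t * K + (1-t) * f x0"
      using mc_iter[OF mid x0, of u' n] uin sub bd[of u'] t unfolding t_def[symmetric] y'eq[symmetric]
      by (smt (verit, ccfv_SIG) mult_left_mono subsetD)
    have yin: "y \<in> {a<..<b}" "2*x0 - y \<in> {a<..<b}"
      using yeq y'eq comb_in[OF x0, of u t] comb_in[OF x0, of u' t] uin sub t by auto
    have "f ((y + (2*x0 - y))/2) \<le> (f y + f (2*x0-y))/2" using mid yin unfolding mconv_def by blast
    then have f3: "f x0 \<le> (f y + f (2*x0-y))/2" by simp
    have "f y - f x0 \<le> t * D" using f1 unfolding D_def by (simp add: algebra_simps)
    moreover have "f x0 - f y \<le> t * D" using f2 f3 unfolding D_def by (simp add: algebra_simps)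
    ultimately show ?thesis unfolding t_def by linarith
  qed
  show ?thesis
    unfolding isCont_def LIM_eq
  proof (intro allI impI)
    fix e :: real assume e: "e > 0"
    obtain n where n: "(1/2::real)^n < e / (D+1)"
      using real_arch_pow_inv[of "e/(D+1)" "1/2"] e D by auto
    have "(1/2)^n * D < e"
    proof -
      have "(1/2)^n * D \<le> (1/2)^n * (D+1)" by simp
      also have "\<dots> < e / (D+1) * (D+1)" using n D by (intro mult_strict_right_mono) auto
      also have "\<dots> = e" using D by simp
      finally show ?thesis .
    qed
    then show "\<exists>s>0. \<forall>x. x \<noteq> x0 \<and> norm (x - x0) < s \<longrightarrow> norm (f x - f x0) < e"
      using key d by (intro exI[of _ "(1/2)^n * d"]) (auto intro: le_less_trans)
  qed
qed
lemma div_half_helper: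
  fixes t q :: real assumes "0 < t" "t \<le> 1/2" "q \<ge> 0" shows "q/(1-t) \<le> 2*q"
proof -
  have "(2*q)*(1-t) - q = q*(1-2*t)" by (simp add: algebra_simps)
  also have "\<dots> \<ge> 0" using assms by simp
  finally have "q \<le> (2*q)*(1-t)" by simp
  moreover have "1 - t > 0" using assms by simp
  ultimately show ?thesis by (simp add: pos_divide_le_eq)
qed

lemma mc_spread:
  fixes f :: "real \<Rightarrow> real" and a b c d x0 K :: real
  assumes mid: "mconv f a b" and d: "d > 0" and sub: "ball c d \<subseteq> {a<..<b}"
    and bd: "\<And>y. y \<in> ball c d \<Longrightarrow> f y \<le> K" and x0: "x0 \<in> {a<..<b}"
  shows "\<exists>d'>0. \<exists>K'. ball x0 d' \<subseteq> {a<..<b} \<and> (\<forall>y\<in>ball x0 d'. f y \<le> K')"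
proof -
  define e where "e = min (x0 - a) (b - x0)"
  have e: "e > 0" using x0 unfolding e_def by auto
  define L where "L = 2*\<bar>x0 - c\<bar> + d + 1"
  have L: "L > 0" unfolding L_def using d by (smt (verit) abs_ge_zero)
  obtain n where n: "(1/2::real)^n < e / L"
    using real_arch_pow_inv[of "e/L" "1/2"] e L by auto
  define t :: real where "t = (1/2)^Suc n"
  have t0: "t > 0" and t1: "t \<le> 1/2" unfolding t_def by (auto simp: power_le_one)
  have "t \<le> (1/2)^n" unfolding t_def by simp
  then have "t * L \<le> (1/2)^n * L" using L by (intro mult_right_mono) auto
  moreover have "(1/2)^n * L < e" using n L by (simp add: pos_less_divide_eq)
  ultimately have tL: "t * L < e" by linarith
  have tLe: "t*L = 2*t*\<bar>x0-c\<bar> + t*d + t" unfolding L_def by (simp add: algebra_simps)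
  have td: "t*d > 0" using t0 d by simp
  define p where "p = (x0 - t*c)/(1-t)"
  have pe: "p - x0 = t*(x0-c)/(1-t)" using t1 unfolding p_def by (simp add: field_simps)
  have "\<bar>p - x0\<bar> = t*\<bar>x0-c\<bar>/(1-t)" using pe t0 t1 by (simp add: abs_mult abs_divide)
  also have "\<dots> \<le> 2*t*\<bar>x0-c\<bar>"
    using div_half_helper[of t "t*\<bar>x0-c\<bar>"] t0 t1 by (simp add: mult.assoc)
  also have "\<dots> < e" using tL tLe td t0 by linarith
  finally have pe2: "\<bar>p - x0\<bar> < e" .
  have p: "p \<in> {a<..<b}" using pe2 unfolding e_def by auto
  have tde: "t * d < e" using tL tLe t0 abs_ge_zero[of "x0-c"] by (smt (verit) mult_nonneg_nonneg)
  show ?thesis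
  proof (intro exI conjI ballI)
    show "t * d > 0" using t0 d by simp
    show "ball x0 (t*d) \<subseteq> {a<..<b}" using tde unfolding e_def by (auto simp: dist_real_def)
    fix y assume y: "y \<in> ball x0 (t*d)"
    define u where "u = c + (y - x0)/t"
    have "\<bar>y - x0\<bar> < d * t" using y by (simp add: dist_real_def mult.commute)
    then have "\<bar>(y - x0)/t\<bar> < d" using t0 by (simp add: abs_divide pos_divide_less_eq)
    then have u: "u \<in> ball c d" unfolding u_def by (simp add: dist_real_def)
    have e1: "(1-t)*p = x0 - t*c" using t1 unfolding p_def by simp
    have e2: "t*u = t*c + (y - x0)" using t0 unfolding u_def by (simp add: distrib_left)
    have "p + t * (u - p) = (1-t)*p + t*u" by (simp add: algebra_simps)
    also have "\<dots> = y" using e1 e2 by simp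
    finally have yeq: "y = p + (1/2)^Suc n * (u - p)" unfolding t_def by simp
    have "f y \<le> t * f u + (1-t) * f p"
      using mc_iter[OF mid p, of u "Suc n"] u sub unfolding t_def yeq by auto
    also have "\<dots> \<le> t * K + (1-t) * f p" using bd[OF u] t0 by simp
    finally show "f y \<le> t * K + (1-t) * f p" .
  qed
qed


theorem theorem3p4:
  fixes h f :: "real \<Rightarrow> real" and a b :: real and M :: "real set"
  assumes h_nonneg: "\<And>t. h t \<ge> 0"
    and h_supermult: "super_multiplicative h"
    and h_ge: "\<And>t. h t \<ge> t"
    and h_one: "h 1 = 1"
    and f_hmid: "h_mid_convex h {a<..<b} f"
    and M_sub: "M \<subseteq> {a<..<b}"
    and M_meas: "M \<in> sets lebesgue"
    and M_pos: "emeasure lebesgue M > 0"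
    and f_bdd: "\<exists>K. \<forall>x\<in>M. f x \<le> K"
  shows "continuous_on {a<..<b} f"
proof -
  have "h (2 * (1/2)) \<ge> h 2 * h (1/2)" using h_supermult unfolding super_multiplicative_def by blast
  then have h1: "h 2 * h (1/2) \<le> 1" using h_one by simp
  have "2 * h (1/2) \<le> h 2 * h (1/2)" using h_ge[of 2] h_nonneg[of "1/2"] by (intro mult_right_mono) auto
  then have "h (1/2) \<le> 1/2" using h1 by linarith
  then have hh: "h (1/2) = 1/2" using h_ge[of "1/2"] by linarith
  have mid: "mconv f a b" using f_hmid unfolding h_mid_convex_def mconv_def hh by simp
  obtain K where K: "\<And>x. x \<in> M \<Longrightarrow> f x \<le> K" using f_bdd by blast
  have "emeasure lebesgue M \<le> emeasure lebesgue {a<..<b}"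
    using M_sub by (intro emeasure_mono) auto
  also have "\<dots> < \<infinity>" by (cases "a \<le> b") auto
  finally have Ml: "M \<in> lmeasurable" using M_meas by (intro fmeasurableI)
  then have "emeasure lebesgue M = ennreal (measure lebesgue M)" by (simp add: emeasure_eq_measure2)
  then have Mp: "measure lebesgue M > 0" using M_pos by simp
  obtain c r where r: "r > 0" and big: "measure lebesgue (M \<inter> ball c r) > 3/2 * r"
    using density_34[OF Ml Mp] by blast
  have "M \<inter> ball c r \<in> lmeasurable"
    using Ml by (intro fmeasurable_Int_fmeasurable) (auto simp: borel_open sets_completionI_sets)
  then have "emeasure lebesgue (M \<inter> ball c r) = ennreal (measure lebesgue (M \<inter> ball c r))"
    by (simp add: emeasure_eq_measure2)
  then have big2: "emeasure lebesgue (M \<inter> ball c r) > ennreal (3/2 * r)"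
    using big r by (simp add: ennreal_less_iff)
  have mids: "\<exists>x\<in>M. \<exists>y\<in>M. z = (x + y)/2" if "z \<in> ball c (r/4)" for z
    using steinhaus_step[OF M_meas r big2, of z] that by (simp add: dist_commute)
  have sub: "ball c (r/4) \<subseteq> {a<..<b}"
  proof
    fix z assume "z \<in> ball c (r/4)"
    then obtain x y where "x \<in> M" "y \<in> M" "z = (x+y)/2" using mids by blast
    then have "x \<in> {a<..<b}" "y \<in> {a<..<b}" "z = (x+y)/2" using M_sub by auto
    then show "z \<in> {a<..<b}" by simp
  qed
  have bd: "f z \<le> K" if zb: "z \<in> ball c (r/4)" for z
  proof -
    obtain x y where xy: "x \<in> M" "y \<in> M" "z = (x+y)/2" using mids[OF zb] by blast
    have "x \<in> {a<..<b}" "y \<in> {a<..<b}" using xy M_sub by auto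
    then have "f ((x+y)/2) \<le> (f x + f y)/2" using mid unfolding mconv_def by blast
    then have "f z \<le> (f x + f y)/2" unfolding xy(3) .
    then show ?thesis using K[OF xy(1)] K[OF xy(2)] by simp
  qed
  have "isCont f x0" if x0: "x0 \<in> {a<..<b}" for x0
  proof -
    have r4: "r/4 > 0" using r by simp
    obtain d' K' where d': "d' > 0" "ball x0 d' \<subseteq> {a<..<b}" "\<forall>y\<in>ball x0 d'. f y \<le> K'"
      using mc_spread[OF mid r4 sub bd x0] by blast
    show ?thesis using d'(3) by (intro mc_cont_at[OF mid x0 d'(1,2)]) auto
  qed
  then show ?thesis by (intro continuous_at_imp_continuous_on) auto
qed

end
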